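(* Under the Setting and Algorithm described in the context, if $\{x_k\}_{k\ge1}$ is generated by the inexact CSA algorithm with policy (P1), then $\mathcal B\neq\emptyset$, so that $\bar x_{N,s}$ is well defined.
   Context: Setting. $\mathcal X\subset\mathbb R^n$ is convex and compact; $f:\mathcal X\to\mathbb R$ is convex and $L_f$-Lipschitz; $\Delta\subset\mathbb R^d$ is compact; $g:\mathcal X\times\Delta\to\mathbb R$ is such that for every $\delta\in\Delta$, $x\mapsto g(x,\delta)$ is convex and $L_{g,\mathcal X}$-Lipschitz, and for every $x\in\mathcal X$, $\delta\mapsto g(x,\delta)$ is $L_{g,\Delta}$-Lipschitz. Let $G(x):=\max_{\delta\in\Delta}g(x,\delta)$ and assume the problem $\min_{x\in\mathcal X}\{f(x):G(x)\le0\}$ has an optimal solution $x^*$. Norms are Euclidean. $f'(x)$ denotes a subgradient of $f$ at $x$ and $g'(x,\delta)$ a subgradient of $g(\cdot,\delta)$ at $x$. Let $\omega_{\mathcal X}:\mathcal X\to\mathbb R$ be continuously differentiable and $1$-strongly convex; $V(x,z):=\omega_{\mathcal X}(z)-\omega_{\mathcal X}(x)-\langle\nabla\omega_{\mathcal X}(x),z-x\rangle$; prox-mapping $P_{x,\mathcal X}(y):=\arg\min_{z\in\mathcal X}\{\langle y,z\rangle+V(x,z)\}$; $D_{\mathcal X}:=\sqrt{\max_{x,z\in\mathcal X}V(x,z)}$. Algorithm (inexact CSA). Inputs: $N\ge1$, $x_1\in\mathcal X$, tolerances $\eta_k>0$, step-sizes $\gamma_k>0$. For $k=1,\dots,N$: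 choose some $\delta_k\in\Delta$ (an approximate maximizer of $g(x_k,\cdot)$); set $h_k=f'(x_k)$ if $g(x_k,\delta_k)\le\eta_k$ and $h_k=g'(x_k,\delta_k)$ otherwise; set $x_{k+1}=P_{x_k,\mathcal X}(\gamma_kh_k)$. For $1\le s\le N$ let $I=\{s,\dots,N\}$, $\mathcal B:=\{k\in I: g(x_k,\delta_k)\le\eta_k\}$, $\mathcal N:=I\setminus\mathcal B$, and output $\bar x_{N,s}:=\sum_{k\in\mathcal B}\gamma_kx_k/\sum_{k\in\mathcal B}\gamma_k$. Policy (P1): $\eta_k=\frac{6(L_f+L_{g,\mathcal X})D_{\mathcal X}}{\sqrt k}$, $\gamma_k=\frac{D_{\mathcal X}}{\sqrt k(L_f+L_{g,\mathcal X})}$ for $k=1,\dots,N$, and $s=\lceil N/2\rceil$. *)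

theory Defs
  imports "HOL-Analysis.Analysis"
begin

definition strongly_convex_on :: "real \<Rightarrow> 'a::real_normed_vector set \<Rightarrow> ('a \<Rightarrow> real) \<Rightarrow> bool" where
  "strongly_convex_on mu S w \<longleftrightarrow> convex S \<and>
     (\<forall>x\<in>S. \<forall>y\<in>S. \<forall>t::real. 0 \<le> t \<and> t \<le> 1 \<longrightarrow>
        w (t *\<^sub>R x + (1 - t) *\<^sub>R y) \<le> t * w x + (1 - t) * w y - mu / 2 * t * (1 - t) * (norm (x - y))\<^sup>2)"

definition is_subgradient :: "'a::real_inner set \<Rightarrow> ('a \<Rightarrow> real) \<Rightarrow> 'a \<Rightarrow> 'a \<Rightarrow> bool" where
  "is_subgradient X f x v \<longleftrightarrow> (\<forall>z\<in>X. f z \<ge> f x + inner v (z - x))"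

definition bregman :: "('a::real_inner \<Rightarrow> real) \<Rightarrow> ('a \<Rightarrow> 'a) \<Rightarrow> 'a \<Rightarrow> 'a \<Rightarrow> real" where
  "bregman w gw x z = w z - w x - inner (gw x) (z - x)"

definition is_prox :: "('a::real_inner \<Rightarrow> real) \<Rightarrow> ('a \<Rightarrow> 'a) \<Rightarrow> 'a set \<Rightarrow> 'a \<Rightarrow> 'a \<Rightarrow> 'a \<Rightarrow> bool" where
  "is_prox w gw X x y z \<longleftrightarrow> z \<in> X \<and>
     (\<forall>u\<in>X. inner y z + bregman w gw x z \<le> inner y u + bregman w gw x u)"

definition diamD :: "('a::real_inner \<Rightarrow> real) \<Rightarrow> ('a \<Rightarrow> 'a) \<Rightarrow> 'a set \<Rightarrow> real" where
  "diamD w gw X = sqrt (Sup ((\<lambda>(x, z). bregman w gw x z) ` (X \<times> X)))"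

definition Gmax :: "('a \<Rightarrow> 'b \<Rightarrow> real) \<Rightarrow> 'b set \<Rightarrow> 'a \<Rightarrow> real" where
  "Gmax g Delta x = Sup (g x ` Delta)"

end

theory Submission imports Defs begin

lemma dir_deriv:
  fixes w :: "'a::real_inner \<Rightarrow> real"
  assumes "convex X" "z \<in> X" "u \<in> X" "(w has_derivative (\<lambda>v. inner g v)) (at z within X)"
  shows "((\<lambda>t. (w (z + t *\<^sub>R (u - z)) - w z) / t) \<longlongrightarrow> inner g (u - z)) (at_right 0)"
proof -
  define p where "p = (\<lambda>t::real. z + t *\<^sub>R (u - z))"
  have pd: "(p has_derivative (\<lambda>t. t *\<^sub>R (u - z))) (at 0 within {0..1})"
    unfolding p_def by (auto intro!: derivative_eq_intros)
  have sub: "p ` {0..1} \<subseteq> X"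
  proof
    fix y assume "y \<in> p ` {0..1}"
    then obtain t where t: "t \<in> {0..1}" "y = p t" by auto
    have "y = (1 - t) *\<^sub>R z + t *\<^sub>R u" using t by (simp add: p_def algebra_simps)
    then show "y \<in> X" using assms(1,2,3) t by (auto intro: convexD_alt)
  qed
  have p0: "p 0 = z" by (simp add: p_def)
  have wd: "(w has_derivative (\<lambda>v. inner g v)) (at (p 0) within p ` {0..1})"
    using has_derivative_subset[OF assms(4) sub] p0 by simp
  have "((w \<circ> p) has_derivative ((\<lambda>v. inner g v) \<circ> (\<lambda>t. t *\<^sub>R (u - z)))) (at 0 within {0..1})"
    by (rule diff_chain_within[OF pd wd])
  moreover have "((\<lambda>v. inner g v) \<circ> (\<lambda>t. t *\<^sub>R (u - z))) = (*) (inner g (u - z))"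
    by (auto simp: fun_eq_iff)
  ultimately have "((w \<circ> p) has_field_derivative (inner g (u - z))) (at 0 within {0..1})"
    by (simp add: has_field_derivative_def)
  then have "((\<lambda>y. ((w \<circ> p) y - (w \<circ> p) 0) / (y - 0)) \<longlongrightarrow> inner g (u - z)) (at 0 within {0..1})"
    by (simp add: has_field_derivative_iff)
  then show ?thesis
    by (simp add: at_within_Icc_at_right p_def)
qed

lemma V_ge:
  fixes w :: "'a::real_inner \<Rightarrow> real"
  assumes sc: "strongly_convex_on 1 X w" and x: "x \<in> X" and u: "u \<in> X"
    and wd: "(w has_derivative (\<lambda>v. inner (gw x) v)) (at x within X)"
  shows "bregman w gw x u \<ge> (norm (u - x))\<^sup>2 / 2"
proof -
  have cX: "convex X" using sc by (simp add: strongly_convex_on_def)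
  have lim: "((\<lambda>t. (w (x + t *\<^sub>R (u - x)) - w x) / t) \<longlongrightarrow> inner (gw x) (u - x)) (at_right 0)"
    by (rule dir_deriv[OF cX x u wd])
  have lim2: "((\<lambda>t::real. w u - w x - (1 - t) / 2 * (norm (u - x))\<^sup>2) \<longlongrightarrow> w u - w x - (1 - 0) / 2 * (norm (u - x))\<^sup>2) (at_right 0)"
    by (intro tendsto_intros) auto
  have ev: "\<forall>\<^sub>F t in at_right 0. (w (x + t *\<^sub>R (u - x)) - w x) / t \<le> w u - w x - (1 - t) / 2 * (norm (u - x))\<^sup>2"
  proof -
    have "\<forall>\<^sub>F t in at_right (0::real). t \<in> {0<..<1}" by (rule eventually_at_right_real) simp
    then show ?thesis
    proof eventually_elim
      case (elim t)
      then have elim: "0 < t" "t < 1" by auto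
      have "w (t *\<^sub>R u + (1 - t) *\<^sub>R x) \<le> t * w u + (1 - t) * w x - 1 / 2 * t * (1 - t) * (norm (u - x))\<^sup>2"
        using sc u x elim unfolding strongly_convex_on_def by auto
      moreover have "t *\<^sub>R u + (1 - t) *\<^sub>R x = x + t *\<^sub>R (u - x)" by (simp add: algebra_simps)
      ultimately have "w (x + t *\<^sub>R (u - x)) - w x \<le> t * (w u - w x - (1 - t) / 2 * (norm (u - x))\<^sup>2)"
        by (simp add: algebra_simps)
      then show ?case using elim by (simp add: divide_le_eq mult.commute)
    qed
  qed
  have "inner (gw x) (u - x) \<le> w u - w x - (1 - 0) / 2 * (norm (u - x))\<^sup>2"
    by (rule tendsto_le[OF trivial_limit_at_right_real lim2 lim ev])
  then show ?thesis by (simp add: bregman_def field_simps)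
qed

lemma three_point:
  fixes w :: "'a::real_inner \<Rightarrow> real"
  assumes cX: "convex X" and x: "x \<in> X" and u: "u \<in> X"
    and wd: "(w has_derivative (\<lambda>v. inner (gw z) v)) (at z within X)"
    and pr: "is_prox w gw X x y z"
  shows "inner y (z - u) \<le> bregman w gw x u - bregman w gw x z - bregman w gw z u"
proof -
  have z: "z \<in> X" using pr by (simp add: is_prox_def)
  have lim: "((\<lambda>t. (w (z + t *\<^sub>R (u - z)) - w z) / t) \<longlongrightarrow> inner (gw z) (u - z)) (at_right 0)"
    by (rule dir_deriv[OF cX z u wd])
  have lim2: "((\<lambda>t. inner (y - gw x) (u - z) + (w (z + t *\<^sub>R (u - z)) - w z) / t) \<longlongrightarrow> inner (y - gw x) (u - z) + inner (gw z) (u - z)) (at_right 0)"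
    by (intro tendsto_intros lim)
  have ev: "\<forall>\<^sub>F t in at_right 0. 0 \<le> inner (y - gw x) (u - z) + (w (z + t *\<^sub>R (u - z)) - w z) / t"
  proof -
    have "\<forall>\<^sub>F t in at_right (0::real). t \<in> {0<..<1}" by (rule eventually_at_right_real) simp
    then show ?thesis
    proof eventually_elim
      case (elim t)
      then have elim: "0 < t" "t < 1" by auto
      have "z + t *\<^sub>R (u - z) = (1 - t) *\<^sub>R z + t *\<^sub>R u" by (simp add: algebra_simps)
      then have vX: "z + t *\<^sub>R (u - z) \<in> X" using cX z u elim by (auto intro: convexD_alt)
      have "inner y z + bregman w gw x z \<le> inner y (z + t *\<^sub>R (u - z)) + bregman w gw x (z + t *\<^sub>R (u - z))"
        using pr vX by (simp add: is_prox_def)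
      then have "0 \<le> t * inner (y - gw x) (u - z) + (w (z + t *\<^sub>R (u - z)) - w z)"
        by (simp add: bregman_def inner_diff_left inner_diff_right inner_add_right algebra_simps)
      then have "0 \<le> (t * inner (y - gw x) (u - z) + (w (z + t *\<^sub>R (u - z)) - w z)) / t"
        using elim by simp
      also have "\<dots> = inner (y - gw x) (u - z) + (w (z + t *\<^sub>R (u - z)) - w z) / t"
        using elim by (simp add: add_divide_distrib)
      finally show ?case .
    qed
  qed
  have "0 \<le> inner (y - gw x) (u - z) + inner (gw z) (u - z)"
    by (rule tendsto_lowerbound[OF lim2 ev trivial_limit_at_right_real])
  then show ?thesis
    by (simp add: bregman_def inner_diff_left inner_diff_right algebra_simps)
qed

lemma s_facts:
  fixes N :: nat assumes "N \<ge> 1"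
  shows "1 \<le> nat \<lceil>real N / 2\<rceil>" "nat \<lceil>real N / 2\<rceil> \<le> N" "2 * nat \<lceil>real N / 2\<rceil> \<le> N + 1"
proof -
  have a: "real_of_int \<lceil>real N / 2\<rceil> < real N / 2 + 1" by linarith
  have b: "real_of_int \<lceil>real N / 2\<rceil> \<ge> real N / 2" by linarith
  have p: "real N / 2 > 0" using assms by simp
  have "real_of_int \<lceil>real N / 2\<rceil> > 0" using p b by linarith
  then have c: "\<lceil>real N / 2\<rceil> \<ge> 1" by simp
  have d: "2 * \<lceil>real N / 2\<rceil> \<le> int N + 1" using a by linarith
  show "1 \<le> nat \<lceil>real N / 2\<rceil>" using c by linarith
  show "nat \<lceil>real N / 2\<rceil> \<le> N" using d c by linarith
  show "2 * nat \<lceil>real N / 2\<rceil> \<le> N + 1" using d c by linarith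
qed

theorem mainTheorem3:
  fixes X :: "'a::euclidean_space set" and Delta :: "'b::euclidean_space set"
    and f :: "'a \<Rightarrow> real" and g :: "'a \<Rightarrow> 'b \<Rightarrow> real"
    and Lf Lgx LgD :: real
    and w :: "'a \<Rightarrow> real" and gw :: "'a \<Rightarrow> 'a"
    and xstar :: 'a and N :: nat
    and x :: "nat \<Rightarrow> 'a" and delta :: "nat \<Rightarrow> 'b" and h :: "nat \<Rightarrow> 'a"
    and eta gamma :: "nat \<Rightarrow> real"
  assumes X_convex: "convex X" and X_compact: "compact X"
    and f_convex: "convex_on X f" and f_lip: "lipschitz_on Lf X f"
    and Delta_compact: "compact Delta"
    and g_convex: "\<And>d. d \<in> Delta \<Longrightarrow> convex_on X (\<lambda>u. g u d)"
    and g_lipX: "\<And>d. d \<in> Delta \<Longrightarrow> lipschitz_on Lgx X (\<lambda>u. g u d)"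
    and g_lipD: "\<And>u. u \<in> X \<Longrightarrow> lipschitz_on LgD Delta (g u)"
    and xstar_in: "xstar \<in> X" and xstar_feas: "Gmax g Delta xstar \<le> 0"
    and xstar_opt: "\<And>u. u \<in> X \<Longrightarrow> Gmax g Delta u \<le> 0 \<Longrightarrow> f xstar \<le> f u"
    and w_deriv: "\<And>u. u \<in> X \<Longrightarrow> (w has_derivative (\<lambda>v. inner (gw u) v)) (at u within X)"
    and gw_cont: "continuous_on X gw"
    and w_sc: "strongly_convex_on 1 X w"
    and N_pos: "N \<ge> 1"
    and x1: "x 1 \<in> X"
    and delta_in: "\<And>k. k \<in> {1..N} \<Longrightarrow> delta k \<in> Delta"
    and h_f: "\<And>k. k \<in> {1..N} \<Longrightarrow> g (x k) (delta k) \<le> eta k \<Longrightarrow>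
                 is_subgradient X f (x k) (h k) \<and> norm (h k) \<le> Lf"
    and h_g: "\<And>k. k \<in> {1..N} \<Longrightarrow> \<not> g (x k) (delta k) \<le> eta k \<Longrightarrow>
                 is_subgradient X (\<lambda>u. g u (delta k)) (x k) (h k) \<and> norm (h k) \<le> Lgx"
    and x_step: "\<And>k. k \<in> {1..N} \<Longrightarrow> is_prox w gw X (x k) (gamma k *\<^sub>R h k) (x (k + 1))"
    and eta_def: "\<And>k. k \<in> {1..N} \<Longrightarrow>
                   eta k = 6 * (Lf + Lgx) * diamD w gw X / sqrt (real k)"
    and gamma_def: "\<And>k. k \<in> {1..N} \<Longrightarrow>
                   gamma k = diamD w gw X / (sqrt (real k) * (Lf + Lgx))"
  shows "{k \<in> {nat \<lceil>real N / 2\<rceil>..N}. g (x k) (delta k) \<le> eta k} \<noteq> {}"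
proof (rule ccontr)
  assume nt: "\<not> {k \<in> {nat \<lceil>real N / 2\<rceil>..N}. g (x k) (delta k) \<le> eta k} \<noteq> {}"
  define s where "s = nat \<lceil>real N / 2\<rceil>"
  have bad: "\<And>k. k \<in> {s..N} \<Longrightarrow> \<not> g (x k) (delta k) \<le> eta k"
    using nt unfolding s_def by blast
  have s1: "1 \<le> s" and sN: "s \<le> N" and s2: "2 * s \<le> N + 1"
    using s_facts[OF N_pos] unfolding s_def by auto
  have Dne: "delta 1 \<in> Delta" using delta_in N_pos by auto
  have Lgx0: "Lgx \<ge> 0" using g_lipX[OF Dne] by (simp add: lipschitz_on_def)
  have Lf0: "Lf \<ge> 0" using f_lip by (simp add: lipschitz_on_def)
  have xX: "\<And>k. k \<in> {1..N+1} \<Longrightarrow> x k \<in> X"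
  proof -
    fix k assume "k \<in> {1..N+1}"
    then have "1 \<le> k" "k \<le> N + 1" by auto
    then show "x k \<in> X"
    proof (induction k rule: dec_induct)
      case base then show ?case using x1 by simp
    next
      case (step m)
      then have "m \<in> {1..N}" by auto
      then show ?case using x_step[of m] by (simp add: is_prox_def)
    qed
  qed
  have gxs: "\<And>d. d \<in> Delta \<Longrightarrow> g xstar d \<le> 0"
  proof -
    fix d assume d: "d \<in> Delta"
    have "continuous_on Delta (g xstar)" using lipschitz_on_continuous_on[OF g_lipD[OF xstar_in]] .
    then have "bounded (g xstar ` Delta)" by (intro compact_imp_bounded compact_continuous_image Delta_compact)
    then have "bdd_above (g xstar ` Delta)" by (rule bounded_imp_bdd_above)
    then have "g xstar d \<le> Sup (g xstar ` Delta)" using d by (intro cSup_upper) auto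
    then show "g xstar d \<le> 0" using xstar_feas by (simp add: Gmax_def)
  qed
  define S where "S = Sup ((\<lambda>(a, b). bregman w gw a b) ` (X \<times> X))"
  have wcont: "continuous_on X w"
    using w_deriv has_derivative_continuous continuous_on_eq_continuous_within by blast
  obtain M1 where M1: "\<And>a. a \<in> X \<Longrightarrow> norm (w a) \<le> M1"
    using compact_imp_bounded[OF compact_continuous_image[OF wcont X_compact]]
    unfolding bounded_iff by auto
  obtain M2 where M2: "\<And>a. a \<in> X \<Longrightarrow> norm (gw a) \<le> M2"
    using compact_imp_bounded[OF compact_continuous_image[OF gw_cont X_compact]]
    unfolding bounded_iff by auto
  obtain M3 where M3: "\<And>a. a \<in> X \<Longrightarrow> norm a \<le> M3"
    using compact_imp_bounded[OF X_compact] unfolding bounded_iff by auto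
  have Vbd: "\<And>a b. a \<in> X \<Longrightarrow> b \<in> X \<Longrightarrow> bregman w gw a b \<le> M1 + M1 + M2 * (M3 + M3)"
  proof -
    fix a b assume a: "a \<in> X" and b: "b \<in> X"
    have "\<bar>inner (gw a) (b - a)\<bar> \<le> norm (gw a) * norm (b - a)" by (rule Cauchy_Schwarz_ineq2)
    also have "\<dots> \<le> M2 * (M3 + M3)"
    proof (rule mult_mono)
      show "norm (gw a) \<le> M2" using M2 a .
      show "norm (b - a) \<le> M3 + M3" using M3[OF a] M3[OF b] norm_triangle_ineq4[of b a] by linarith
      show "0 \<le> M2" using M2 a norm_ge_zero order_trans by blast
    qed simp
    finally show "bregman w gw a b \<le> M1 + M1 + M2 * (M3 + M3)"
      using M1[OF a] M1[OF b] unfolding bregman_def by auto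
  qed
  have bdd: "bdd_above ((\<lambda>(a, b). bregman w gw a b) ` (X \<times> X))"
    using Vbd by (auto intro!: bdd_aboveI[where M = "M1 + M1 + M2 * (M3 + M3)"])
  have VleS: "\<And>a b. a \<in> X \<Longrightarrow> b \<in> X \<Longrightarrow> bregman w gw a b \<le> S"
    unfolding S_def using bdd by (intro cSup_upper) auto
  have S0: "S \<ge> 0" using VleS[OF xstar_in xstar_in] by (simp add: bregman_def)
  define D where "D = diamD w gw X"
  have DsS: "D = sqrt S" unfolding D_def diamD_def S_def by simp
  have DS: "D\<^sup>2 = S" by (simp only: DsS real_sqrt_pow2[OF S0])
  have D0: "D \<ge> 0" using DsS S0 by simp
  define L where "L = Lf + Lgx"
  define Vf where "Vf = (\<lambda>i. bregman w gw (x i) xstar)"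
  have key: "\<And>k. k \<in> {s..N} \<Longrightarrow> eta k < inner (h k) (x k - xstar) \<and> norm (h k) \<le> Lgx"
  proof -
    fix k assume k: "k \<in> {s..N}"
    then have k1: "k \<in> {1..N}" using s1 by auto
    have hg: "is_subgradient X (\<lambda>u. g u (delta k)) (x k) (h k) \<and> norm (h k) \<le> Lgx"
      using h_g[OF k1 bad[OF k]] .
    then have "g xstar (delta k) \<ge> g (x k) (delta k) + inner (h k) (xstar - x k)"
      using xstar_in by (simp add: is_subgradient_def)
    moreover have "g xstar (delta k) \<le> 0" using gxs delta_in[OF k1] by blast
    moreover have "eta k < g (x k) (delta k)" using bad[OF k] by simp
    moreover have "inner (h k) (xstar - x k) = - inner (h k) (x k - xstar)"
      by (simp add: inner_diff_right)
    ultimately show "eta k < inner (h k) (x k - xstar) \<and> norm (h k) \<le> Lgx" using hg by linarith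
  qed
  have step: "\<And>k. k \<in> {1..N} \<Longrightarrow> gamma k \<ge> 0 \<Longrightarrow>
      gamma k * inner (h k) (x k - xstar) \<le> (gamma k * norm (h k))\<^sup>2 / 2 + Vf k - Vf (Suc k)"
  proof -
    fix k assume k: "k \<in> {1..N}" and g0: "gamma k \<ge> 0"
    have xk: "x k \<in> X" and xk1: "x (Suc k) \<in> X" using xX k by auto
    have tp: "inner (gamma k *\<^sub>R h k) (x (Suc k) - xstar) \<le> bregman w gw (x k) xstar - bregman w gw (x k) (x (Suc k)) - bregman w gw (x (Suc k)) xstar"
      using three_point[of X "x k" xstar w gw "x (Suc k)" "gamma k *\<^sub>R h k", OF X_convex xk xstar_in w_deriv[OF xk1]] x_step[OF k] by simp
    have vg: "bregman w gw (x k) (x (Suc k)) \<ge> (norm (x (Suc k) - x k))\<^sup>2 / 2"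
      by (rule V_ge[where gw=gw, OF w_sc xk xk1 w_deriv[OF xk]])
    have cs: "inner (gamma k *\<^sub>R h k) (x k - x (Suc k)) \<le> (gamma k * norm (h k)) * norm (x (Suc k) - x k)"
    proof -
      have "inner (gamma k *\<^sub>R h k) (x k - x (Suc k)) \<le> norm (gamma k *\<^sub>R h k) * norm (x k - x (Suc k))"
        by (rule norm_cauchy_schwarz)
      also have "\<dots> = (gamma k * norm (h k)) * norm (x (Suc k) - x k)"
        using g0 by (simp add: norm_minus_commute)
      finally show ?thesis .
    qed
    have amgm: "(gamma k * norm (h k)) * norm (x (Suc k) - x k) - (norm (x (Suc k) - x k))\<^sup>2 / 2 \<le> (gamma k * norm (h k))\<^sup>2 / 2"
    proof -
      have "0 \<le> (gamma k * norm (h k) - norm (x (Suc k) - x k))\<^sup>2" by simp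
      then show ?thesis by (simp add: power2_diff field_simps)
    qed
    have split: "inner (gamma k *\<^sub>R h k) (x k - xstar) = inner (gamma k *\<^sub>R h k) (x k - x (Suc k)) + inner (gamma k *\<^sub>R h k) (x (Suc k) - xstar)"
      by (simp add: inner_diff_right)
    have "gamma k * inner (h k) (x k - xstar) = inner (gamma k *\<^sub>R h k) (x k - xstar)" by simp
    then show "gamma k * inner (h k) (x k - xstar) \<le> (gamma k * norm (h k))\<^sup>2 / 2 + Vf k - Vf (Suc k)"
      using split tp vg cs amgm unfolding Vf_def by linarith
  qed
  show False
  proof (cases "L = 0")
    case True
    then have "Lgx = 0" using Lf0 Lgx0 unfolding L_def by linarith
    have sS: "s \<in> {s..N}" and sI: "s \<in> {1..N}" using s1 sN by auto
    have "norm (h s) \<le> 0" using key[OF sS] \<open>Lgx = 0\<close> by simp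
    then have "h s = 0" by simp
    moreover have "eta s = 0" using eta_def[OF sI] True unfolding L_def by simp
    ultimately show False using key[OF sS] by simp
  next
    case False
    then have Lp: "L > 0" using Lf0 Lgx0 unfolding L_def by linarith
    have each: "\<And>k. k \<in> {s..N} \<Longrightarrow> 11 / 2 * (D\<^sup>2 / real k) \<le> Vf k - Vf (Suc k)"
    proof -
      fix k assume k: "k \<in> {s..N}"
      then have k1: "k \<in> {1..N}" using s1 by auto
      have kp: "real k > 0" using k1 by auto
      have sq: "sqrt (real k) > 0" using kp by simp
      have ga: "gamma k = D / (sqrt (real k) * L)" using gamma_def[OF k1] unfolding D_def L_def .
      have et: "eta k = 6 * L * D / sqrt (real k)" using eta_def[OF k1] unfolding D_def L_def .
      have g0: "gamma k \<ge> 0" using ga D0 Lp sq by simp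
      have "gamma k * eta k = (6 * D * D * L) / ((sqrt (real k) * sqrt (real k)) * L)"
        unfolding ga et by (simp add: field_simps)
      also have "\<dots> = 6 * (D\<^sup>2 / real k)" using Lp kp by (simp add: power2_eq_square)
      finally have ge: "gamma k * eta k = 6 * (D\<^sup>2 / real k)" .
      have hh: "norm (h k) \<le> L" using key[OF k] Lf0 unfolding L_def by linarith
      have "(gamma k * norm (h k))\<^sup>2 \<le> (gamma k * L)\<^sup>2"
        using hh g0 by (intro power_mono mult_left_mono) auto
      also have "(gamma k * L)\<^sup>2 = (D * D * (L * L)) / ((sqrt (real k) * sqrt (real k)) * (L * L))"
        unfolding ga by (simp add: field_simps power2_eq_square)
      also have "\<dots> = D\<^sup>2 / real k" using Lp kp by (simp add: power2_eq_square)
      finally have t2: "(gamma k * norm (h k))\<^sup>2 \<le> D\<^sup>2 / real k" .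
      have "gamma k * eta k \<le> gamma k * inner (h k) (x k - xstar)"
        using key[OF k] g0 by (intro mult_left_mono) auto
      then show "11 / 2 * (D\<^sup>2 / real k) \<le> Vf k - Vf (Suc k)"
        using step[OF k1 g0] ge t2 by linarith
    qed
    have sumle: "(\<Sum>k=s..N. 11 / 2 * (D\<^sup>2 / real k)) \<le> (\<Sum>k=s..N. Vf k - Vf (Suc k))"
      by (rule sum_mono) (rule each)
    have tel: "(\<Sum>k=s..N. Vf k - Vf (Suc k)) = Vf s - Vf (Suc N)"
      using sum_Suc_diff[of s N "\<lambda>i. - Vf i"] sN by simp
    have Vs: "Vf s \<le> D\<^sup>2" using VleS[OF xX xstar_in, of s] s1 sN DS unfolding Vf_def by auto
    have VN: "Vf (Suc N) \<ge> 0"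
    proof -
      have "x (Suc N) \<in> X" using xX[of "Suc N"] by simp
      from V_ge[where gw=gw, OF w_sc this xstar_in w_deriv[OF this]] show ?thesis unfolding Vf_def
        by (smt (verit) zero_le_power2 divide_nonneg_pos)
    qed
    have lb: "(\<Sum>k=s..N. D\<^sup>2 / real N) \<le> (\<Sum>k=s..N. D\<^sup>2 / real k)"
      using s1 by (intro sum_mono divide_left_mono) auto
    have "(\<Sum>k=s..N. D\<^sup>2 / real N) = real (N + 1 - s) * (D\<^sup>2 / real N)" by simp
    moreover have "real (N + 1 - s) * (D\<^sup>2 / real N) \<ge> D\<^sup>2 / 2"
    proof -
      have "real (N + 1 - s) \<ge> real N / 2" using s2 sN by linarith
      then have "real (N + 1 - s) * (D\<^sup>2 / real N) \<ge> real N / 2 * (D\<^sup>2 / real N)"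
        by (intro mult_right_mono) auto
      also have "real N / 2 * (D\<^sup>2 / real N) = D\<^sup>2 / 2" using N_pos by simp
      finally show ?thesis .
    qed
    ultimately have "D\<^sup>2 / 2 \<le> (\<Sum>k=s..N. D\<^sup>2 / real k)" using lb by linarith
    moreover have "(\<Sum>k=s..N. 11 / 2 * (D\<^sup>2 / real k)) = 11 / 2 * (\<Sum>k=s..N. D\<^sup>2 / real k)"
      by (simp add: sum_distrib_left)
    ultimately have "11 / 4 * D\<^sup>2 \<le> D\<^sup>2" using sumle tel Vs VN by linarith
    then have "D\<^sup>2 \<le> 0" by linarith
    then have "D\<^sup>2 = 0" using zero_le_power2[of D] by linarith
    then have "D = 0" by simp
    have sS: "s \<in> {s..N}" and sI: "s \<in> {1..N}" using s1 sN by auto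
    have xs: "x s \<in> X" using xX sI by auto
    have b0: "bregman w gw (x s) xstar \<le> 0" using Vs \<open>D = 0\<close> unfolding Vf_def by simp
    have "(norm (xstar - x s))\<^sup>2 / 2 \<le> bregman w gw (x s) xstar"
      using V_ge[where gw=gw, OF w_sc xs xstar_in w_deriv[OF xs]] .
    then have "(norm (xstar - x s))\<^sup>2 = 0" using b0 zero_le_power2[of "norm (xstar - x s)"] by linarith
    then have "x s = xstar" by simp
    moreover have "eta s = 0" using eta_def[OF sI] \<open>D = 0\<close> unfolding D_def by simp
    ultimately show False using key[OF sS] by simp
  qed
qed

end
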